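(* Let $\mathbf{A}\in\mathbb{R}^{m\times n}$ be an $s$-regular matrix and $\mathbf{b}\in\mathbb{R}^m$, where $s$ is an integer with $0<s<n$, and let $f(\mathbf{x})=\|\mathbf{A}\mathbf{x}-\mathbf{b}\|^2$. Then the number of BF vectors of the problem (P): minimize $f(\mathbf{x})$ subject to $\|\mathbf{x}\|_0\le s$, is finite.
   Context: $\|\mathbf{x}\|_0$ denotes the number of nonzero components of $\mathbf{x}$ and $C_s=\{\mathbf{x}:\|\mathbf{x}\|_0\le s\}$; $I_1(\mathbf{x})=\{i:x_i\neq 0\}$. A matrix $\mathbf{A}$ is $s$-regular if for every index set $I\subseteq\{1,\dots,n\}$ with $|I|=s$ the columns of $\mathbf{A}$ indexed by $I$ are linearly independent. A vector $\mathbf{x}^*\in C_s$ is a basic feasible (BF) vector of (P) if: when $\|\mathbf{x}^*\|_0<s$, $\nabla f(\mathbf{x}^* )=0$; and when $\|\mathbf{x}^*\|_0=s$, $\nabla_i f(\mathbf{x}^* )=0$ for all $i\in I_1(\mathbf{x}^* )$. *)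

theory Defs
  imports "HOL-Analysis.Analysis"
begin

definition supp_vec :: "real ^ 'n \<Rightarrow> 'n set" where
  "supp_vec x = {i. x $ i \<noteq> 0}"

definition l0norm :: "real ^ 'n \<Rightarrow> nat" where
  "l0norm x = card (supp_vec x)"

definition s_regular :: "nat \<Rightarrow> real ^ 'n ^ 'm \<Rightarrow> bool" where
  "s_regular s A \<longleftrightarrow>
     (\<forall>I :: 'n set. card I = s \<longrightarrow>
        (\<forall>c :: 'n \<Rightarrow> real. (\<Sum>i\<in>I. c i *\<^sub>R column i A) = 0 \<longrightarrow> (\<forall>i\<in>I. c i = 0)))"

text \<open>Basic feasible vector of  min f(x) s.t. ||x||_0 <= s, with the gradient of f
  taken in the sense of GDERIV (Frechet derivative represented by inner product).\<close>
definition BF_vector :: "(real ^ 'n \<Rightarrow> real) \<Rightarrow> nat \<Rightarrow> real ^ 'n \<Rightarrow> bool" where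
  "BF_vector f s x \<longleftrightarrow>
     l0norm x \<le> s \<and>
     (\<exists>g. GDERIV f x :> g \<and>
          (l0norm x < s \<longrightarrow> g = 0) \<and>
          (l0norm x = s \<longrightarrow> (\<forall>i\<in>supp_vec x. g $ i = 0)))"

end

theory Submission
  imports Defs
begin
lemma grad_comp:
  fixes A :: "real ^ 'n ^ 'm" and b :: "real ^ 'm"
  assumes "GDERIV (\<lambda>x. (norm (A *v x - b))\<^sup>2) x :> g"
  shows "g $ i = 2 * inner (column i A) (A *v x - b)"
proof -
  have lin: "bounded_linear (\<lambda>h. A *v h)"
    by (simp add: linear_conv_bounded_linear)
  have d1: "((\<lambda>x. A *v x - b) has_derivative (\<lambda>h. A *v h)) (at x)"
    using has_derivative_diff[OF bounded_linear_imp_has_derivative[OF lin] has_derivative_const[of b]] by simp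
  have d2: "((\<lambda>x. (norm (A *v x - b))\<^sup>2) has_derivative
        (\<lambda>h. inner (A *v x - b) (A *v h) + inner (A *v h) (A *v x - b))) (at x)"
    unfolding power2_norm_eq_inner
    by (rule has_derivative_inner[OF d1 d1])
  have "(\<lambda>h. inner h g) = (\<lambda>h. inner (A *v x - b) (A *v h) + inner (A *v h) (A *v x - b))"
    using has_derivative_unique[OF assms[unfolded gderiv_def] d2] .
  hence "inner (axis i 1) g = inner (A *v x - b) (A *v axis i 1) + inner (A *v axis i 1) (A *v x - b)"
    by metis
  moreover have "A *v axis i 1 = column i A"
    by (simp add: vec_eq_iff matrix_vector_mult_def column_def axis_def if_distrib[of "times _"] cong: if_cong)
  moreover have "inner g (axis i 1) = g $ i" by (simp add: inner_axis)
  ultimately show ?thesis by (simp add: inner_commute)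
qed

lemma bf_char:
  fixes A :: "real ^ 'n ^ 'm" and b :: "real ^ 'm"
  assumes "BF_vector (\<lambda>x. (norm (A *v x - b))\<^sup>2) s x"
  shows "l0norm x \<le> s \<and> (\<forall>i\<in>supp_vec x. inner (column i A) (A *v x - b) = 0)"
proof -
  from assms obtain g where le: "l0norm x \<le> s" and g: "GDERIV (\<lambda>x. (norm (A *v x - b))\<^sup>2) x :> g"
    and c1: "l0norm x < s \<longrightarrow> g = 0" and c2: "l0norm x = s \<longrightarrow> (\<forall>i\<in>supp_vec x. g $ i = 0)"
    unfolding BF_vector_def by blast
  have "\<forall>i\<in>supp_vec x. g $ i = 0" using le c1 c2 by force
  thus ?thesis using le grad_comp[OF g] by simp
qed

lemma bf_unique:
  fixes A :: "real ^ 'n ^ 'm" and b :: "real ^ 'm"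
  assumes reg: "s_regular s A" and sn: "s \<le> CARD('n)"
    and hx: "l0norm x \<le> s" "\<forall>i\<in>supp_vec x. inner (column i A) (A *v x - b) = 0"
    and hy: "\<forall>i\<in>supp_vec y. inner (column i A) (A *v y - b) = 0"
    and eq: "supp_vec x = supp_vec y"
  shows "x = y"
proof -
  define S where "S = supp_vec x"
  define d where "d = x - y"
  have fS: "finite S" by simp
  have d0: "\<And>j. j \<notin> S \<Longrightarrow> d $ j = 0"
    using eq unfolding S_def d_def supp_vec_def by auto
  have Ad: "A *v d = (\<Sum>i\<in>S. d $ i *\<^sub>R column i A)"
  proof -
    have "A *v d = (\<Sum>i\<in>UNIV. d $ i *\<^sub>R column i A)"
      by (simp add: matrix_mult_sum scalar_mult_eq_scaleR)
    also have "\<dots> = (\<Sum>i\<in>S. d $ i *\<^sub>R column i A)"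
      by (rule sum.mono_neutral_right) (auto simp: d0)
    finally show ?thesis .
  qed
  have orth: "\<And>i. i \<in> S \<Longrightarrow> inner (column i A) (A *v d) = 0"
  proof -
    fix i assume "i \<in> S"
    hence "inner (column i A) (A *v x - b) = 0" "inner (column i A) (A *v y - b) = 0"
      using hx hy eq S_def by auto
    moreover have "A *v d = (A *v x - b) - (A *v y - b)"
      by (simp add: d_def matrix_vector_mult_diff_distrib)
    ultimately show "inner (column i A) (A *v d) = 0" by (simp add: inner_diff_right)
  qed
  have "inner (A *v d) (A *v d) = (\<Sum>i\<in>S. d $ i * inner (column i A) (A *v d))"
    by (subst (1) Ad) (simp add: inner_sum_left)
  also have "\<dots> = 0" by (simp add: orth)
  finally have Ad0: "A *v d = 0" by simp
  have "card S \<le> s" using hx(1) unfolding S_def l0norm_def by simp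
  then obtain I where SI: "S \<subseteq> I" and cI: "card I = s"
    using exists_subset_between[of S s UNIV] sn by auto
  have "(\<Sum>i\<in>I. d $ i *\<^sub>R column i A) = (\<Sum>i\<in>S. d $ i *\<^sub>R column i A)"
    by (rule sum.mono_neutral_right) (auto simp: SI d0)
  hence "(\<Sum>i\<in>I. d $ i *\<^sub>R column i A) = 0" using Ad Ad0 by simp
  hence "\<forall>i\<in>I. d $ i = 0" using reg cI unfolding s_regular_def by blast
  hence "\<forall>i. d $ i = 0" using SI d0 by blast
  thus ?thesis unfolding d_def by (simp add: vec_eq_iff)
qed

theorem lemma2p1:
  fixes A :: "real ^ 'n ^ 'm" and b :: "real ^ 'm" and s :: nat
  assumes "0 < s" and "s < CARD('n)"
    and "s_regular s A"
  shows "finite {x :: real ^ 'n. BF_vector (\<lambda>x. (norm (A *v x - b))\<^sup>2) s x}"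
proof (rule finite_imageD[where f = supp_vec])
  show "finite (supp_vec ` {x :: real ^ 'n. BF_vector (\<lambda>x. (norm (A *v x - b))\<^sup>2) s x})"
    by (rule finite_subset[of _ "Pow UNIV"]) auto
  show "inj_on supp_vec {x :: real ^ 'n. BF_vector (\<lambda>x. (norm (A *v x - b))\<^sup>2) s x}"
  proof (rule inj_onI)
    fix x y assume "x \<in> {x :: real ^ 'n. BF_vector (\<lambda>x. (norm (A *v x - b))\<^sup>2) s x}"
      "y \<in> {x :: real ^ 'n. BF_vector (\<lambda>x. (norm (A *v x - b))\<^sup>2) s x}"
      and e: "supp_vec x = supp_vec y"
    hence "l0norm x \<le> s \<and> (\<forall>i\<in>supp_vec x. inner (column i A) (A *v x - b) = 0)"
      "l0norm y \<le> s \<and> (\<forall>i\<in>supp_vec y. inner (column i A) (A *v y - b) = 0)"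
      using bf_char[of A b s x] bf_char[of A b s y] by auto
    thus "x = y" using bf_unique[OF assms(3) _ _ _ _ e, of b] assms(2) by auto
  qed
qed

end
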